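(* Let $U$ be the bilateral shift $(Ug)(n)=g(n-1)$ on $\ell^2(\mathbb Z)$. For every $h\in\mathbb N$, \[(U+U^* )^h=\sum_{k=0}^{\lfloor h/2\rfloor}\alpha_{h,k}\sum_{\substack{\ell,m\ge0\\ \ell+m=h-2k}}U^m(U^* )^\ell,\qquad\alpha_{h,k}:=\binom hk-\binom h{k-1}.\]
   Context: $\mathbb N=\{0,1,2,\dots\}$; convention $\binom h{-1}=0$. *)

theory Defs
  imports "HOL-Analysis.Analysis"
begin

definition ell2Z :: "(int \<Rightarrow> complex) set" where
  "ell2Z = {g. (\<lambda>n. (norm (g n))^2) summable_on UNIV}"

definition shiftU :: "(int \<Rightarrow> complex) \<Rightarrow> (int \<Rightarrow> complex)" where
  "shiftU g = (\<lambda>n. g (n - 1))"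

text \<open>Its Hilbert-space adjoint, the backward shift (U* g)(n) = g(n+1).\<close>
definition shiftUadj :: "(int \<Rightarrow> complex) \<Rightarrow> (int \<Rightarrow> complex)" where
  "shiftUadj g = (\<lambda>n. g (n + 1))"

definition alpha :: "nat \<Rightarrow> nat \<Rightarrow> int" where
  "alpha h k = int (h choose k) - (if k = 0 then 0 else int (h choose (k - 1)))"

end

theory Submission
  imports Defs
begin

definition TT :: "(int \<Rightarrow> complex) \<Rightarrow> (int \<Rightarrow> complex)" where
  "TT = (\<lambda>f. (\<lambda>n. shiftU f n + shiftUadj f n))"

lemma U_pow: "(shiftU ^^ m) f = (\<lambda>n. f (n - int m))"
  by (induction m arbitrary: f) (auto simp: shiftU_def algebra_simps)

lemma Uadj_pow: "(shiftUadj ^^ m) f = (\<lambda>n. f (n + int m))"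
  by (induction m arbitrary: f) (auto simp: shiftUadj_def algebra_simps)

lemma TT_pow: "(TT ^^ h) g = (\<lambda>n. \<Sum>i\<le>h. of_nat (h choose i) * g (n + int h - 2 * int i))"
proof (induction h arbitrary: g)
  case 0
  then show ?case by simp
next
  case (Suc h)
  show ?case
  proof
    fix n
    have "(TT ^^ Suc h) g n = (TT ^^ h) (TT g) n" by (simp add: funpow_Suc_right del: funpow.simps)
    also have "\<dots> = (\<Sum>i\<le>h. of_nat (h choose i) * g (n + int h - 2 * int i - 1))
        + (\<Sum>i\<le>h. of_nat (h choose i) * g (n + int h - 2 * int i + 1))"
      unfolding Suc.IH by (simp add: TT_def shiftU_def shiftUadj_def distrib_left sum.distrib algebra_simps)
    also have "(\<Sum>i\<le>h. of_nat (h choose i) * g (n + int h - 2 * int i + 1))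
       = (\<Sum>i\<le>Suc h. of_nat (h choose i) * g (n + int h - 2 * int i + 1))"
      by simp
    also have "\<dots> = g (n + int h + 1) + (\<Sum>i\<le>h. of_nat (h choose Suc i) * g (n + int h - 2 * int i - 1))"
      by (subst sum.atMost_Suc_shift) (simp add: algebra_simps)
    also have "(\<Sum>i\<le>Suc h. of_nat (Suc h choose i) * g (n + int (Suc h) - 2 * int i))
       = g (n + int h + 1) + (\<Sum>i\<le>h. of_nat (Suc h choose Suc i) * g (n + int h - 2 * int i - 1))"
      by (subst sum.atMost_Suc_shift) (simp add: algebra_simps)
    ultimately show "(TT ^^ Suc h) g n = (\<Sum>i\<le>Suc h. of_nat (Suc h choose i) * g (n + int (Suc h) - 2 * int i))"
      by (simp add: sum.distrib distrib_right)
  qed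
qed

lemma alpha_sum: "(\<Sum>k\<le>r. alpha h k) = int (h choose r)"
  by (induction r) (auto simp: alpha_def)

lemma inner_sum: "(\<Sum>(l, m)\<in>{(l, m). l + m = j}. ((shiftU ^^ m) ((shiftUadj ^^ l) g)) n)
   = (\<Sum>m\<le>j. g (n + int j - 2 * int m))"
  by (rule sum.reindex_bij_witness[where i="\<lambda>m. (j - m, m)" and j=snd])
     (auto simp: U_pow Uadj_pow algebra_simps of_nat_diff)

lemma double_sum:
  fixes x :: "nat \<Rightarrow> complex"
  shows "(\<Sum>k\<in>{0..h div 2}. of_int (alpha h k) * (\<Sum>m\<le>h - 2 * k. x (k + m)))
       = (\<Sum>i\<le>h. of_nat (h choose i) * x i)"
proof -
  have "(\<Sum>k\<in>{0..h div 2}. of_int (alpha h k) * (\<Sum>m\<le>h - 2 * k. x (k + m)))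
      = (\<Sum>(k,m)\<in>Sigma {0..h div 2} (\<lambda>k. {..h - 2 * k}). of_int (alpha h k) * x (k + m))"
    by (simp add: sum.Sigma[symmetric] sum_distrib_left)
  also have "\<dots> = (\<Sum>(i,k)\<in>Sigma {..h} (\<lambda>i. {..min i (h - i)}). of_int (alpha h k) * x i)"
    by (rule sum.reindex_bij_witness[where i="\<lambda>(i,k). (k, i - k)" and j="\<lambda>(k,m). (k+m, k)"]) auto
  also have "\<dots> = (\<Sum>i\<le>h. (\<Sum>k\<le>min i (h - i). of_int (alpha h k)) * x i)"
    by (simp add: sum.Sigma[symmetric] sum_distrib_right)
  also have "\<dots> = (\<Sum>i\<le>h. of_nat (h choose i) * x i)"
  proof (rule sum.cong[OF refl])
    fix i assume "i \<in> {..h}"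
    then have "h choose min i (h - i) = h choose i"
      by (auto simp: min_def binomial_symmetric[symmetric])
    then show "(\<Sum>k\<le>min i (h - i). of_int (alpha h k)) * x i = of_nat (h choose i) * x i"
      using alpha_sum[of h "min i (h - i)"] 
      by (metis of_int_of_nat_eq of_int_sum)
  qed
  finally show ?thesis .
qed

theorem corollary3p3:
  fixes h :: nat and g :: "int \<Rightarrow> complex"
  assumes "g \<in> ell2Z"
  shows "((\<lambda>f. (\<lambda>n. shiftU f n + shiftUadj f n)) ^^ h) g =
    (\<lambda>n. \<Sum>k\<in>{0..h div 2}. of_int (alpha h k) *
          (\<Sum>(l, m)\<in>{(l, m). l + m = h - 2 * k}. ((shiftU ^^ m) ((shiftUadj ^^ l) g)) n))"
proof
  fix n
  define x where "x i = g (n + int h - 2 * int i)" for i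
  have "((\<lambda>f. (\<lambda>n. shiftU f n + shiftUadj f n)) ^^ h) g n = (\<Sum>i\<le>h. of_nat (h choose i) * x i)"
    using TT_pow[of h g] unfolding TT_def x_def by simp
  also have "\<dots> = (\<Sum>k\<in>{0..h div 2}. of_int (alpha h k) * (\<Sum>m\<le>h - 2 * k. x (k + m)))"
    by (rule double_sum[symmetric])
  also have "\<dots> = (\<Sum>k\<in>{0..h div 2}. of_int (alpha h k) *
          (\<Sum>(l, m)\<in>{(l, m). l + m = h - 2 * k}. ((shiftU ^^ m) ((shiftUadj ^^ l) g)) n))"
  proof (rule sum.cong[OF refl])
    fix k assume "k \<in> {0..h div 2}"
    then have "2 * k \<le> h" by auto
    then have "\<And>m. x (k + m) = g (n + int (h - 2 * k) - 2 * int m)"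
      by (simp add: x_def of_nat_diff algebra_simps)
    then show "of_int (alpha h k) * (\<Sum>m\<le>h - 2 * k. x (k + m)) = of_int (alpha h k) *
          (\<Sum>(l, m)\<in>{(l, m). l + m = h - 2 * k}. ((shiftU ^^ m) ((shiftUadj ^^ l) g)) n)"
      by (simp add: inner_sum)
  qed
  finally show "((\<lambda>f. (\<lambda>n. shiftU f n + shiftUadj f n)) ^^ h) g n = (\<Sum>k\<in>{0..h div 2}. of_int (alpha h k) *
          (\<Sum>(l, m)\<in>{(l, m). l + m = h - 2 * k}. ((shiftU ^^ m) ((shiftUadj ^^ l) g)) n))" .
qed

end
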